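(* $\mathtt{normal}$-$\mathtt{pred}$-$\mathtt{dio}$-$\mathtt{ESO}$-$\mathtt{HORN}\subseteq\mathtt{RealTime_{IA}}$: for every normalized predecessor Horn formula with diagonal input-output $\Phi$ there is an iterative array accepting in real time exactly the words $w\in\Sigma^+$ with $\langle w\rangle\models\Phi$.
   Context: Fix a finite alphabet $\Sigma$. A nonempty word $w=w_1\cdots w_n$ is represented by the structure $\langle w\rangle=([1,n];(Q_s)_{s\in\Sigma},\mathtt{min},\mathtt{max},\mathtt{suc},\mathtt{pred})$ with $Q_s(i)\iff w_i=s$, $\mathtt{min}(i)\iff i=1$, $\mathtt{max}(i)\iff i=n$, $\mathtt{suc}(i)=\min(i+1,n)$, $\mathtt{pred}(i)=\max(i-1,1)$; $x-1=\mathtt{pred}(x)$. A normalized predecessor Horn formula with diagonal input-output is $\Phi=\exists\mathbf{R}\forall x\forall y\,\psi(x,y)$, with $\mathbf{R}$ a finite set of binary relation symbols and $\psi$ a conjunction of clauses each of one of the forms: input clauses $x=y\wedge\mathtt{min}(x)\wedge Q_s(x)\to R(x,y)$ or $x=y\wedge\neg\mathtt{min}(x)\wedge Q_s(x)\to R(x,y)$ ($s\in\Sigma$, $R\in\mathbf{R}$); the contradiction clause $\mathtt{max}(x)\wedge\mathtt{max}(y)\wedge R_\bot(x,y)\to\bot$ for a fixed $R_\bot\in\mathbf{R}$; computation clauses $\delta_1\wedge\cdots\wedge\delta_r\to R(x,y)$, $R\in\mathbf{R}$, each $\delta_i$ a conjunction $S(x-1,y)\wedge\neg\mathtt{min}(x)$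 or $S(x,y-1)\wedge\neg\mathtt{min}(y)$, $S\in\mathbf{R}$. $\mathtt{normal}$-$\mathtt{pred}$-$\mathtt{dio}$-$\mathtt{ESO}$-$\mathtt{HORN}$ is the class of languages $\{w\in\Sigma^+:\langle w\rangle\models\Phi\}$ for such $\Phi$. An iterative array is a cellular automaton with finite state set $Q\supseteq\Sigma$, accepting states $Q_{accept}\subseteq Q$, neighborhood $\{-1,0,1\}$, transition function $\delta:Q^3\to Q$ and an input transition function $\delta_{input}$ for the first cell. On input $w=w_1\cdots w_n$ it uses cells $1,\dots,n$; cells outside are permanently in a state $\sharp$, cells not yet reached by information are in a quiescent state $\lambda$. The letter $w_i$ is given to cell 1 at time $i$ (state of cell 1 at time $i\le n$ computed by $\delta_{input}$ from $w_i$ and the previous neighbourhood states); other updates are $\langle c,t\rangle=\delta(\langle c-1,t-1\rangle,\langle c,t-1\rangle,\langle c+1,t-1\rangle)$. The array accepts $w$ in real time iff $\langle 1,n\rangle\in Q_{accept}$; $\mathtt{RealTime_{IA}}$ is the class of languages so accepted. *)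

theory Defs
  imports Main
begin

text \<open>Relation symbols range over a type 'r; the finite set R of symbols is the set of
symbols occurring in the (finite) clause list. Positions of a word w of length n are
1..n; Q_s(i) iff w_i = s, min(i) iff i = 1, max(i) iff i = n, pred(i) = max(i-1,1).\<close>

datatype 'r hyp =
    HypX 'r
  | HypY 'r

datatype ('a, 'r) clause =
    InputMin 'a 'r
  | InputNotMin 'a 'r
  | Contra
  | Comp "'r hyp list" 'r

datatype ('a, 'r) formula =
  Formula (clauses: "('a, 'r) clause list") (rbot: 'r)

definition predp :: "nat \<Rightarrow> nat" where
  "predp i = max (i - 1) 1"

fun hyp_holds :: "('r \<Rightarrow> nat \<Rightarrow> nat \<Rightarrow> bool) \<Rightarrow> nat \<Rightarrow> nat \<Rightarrow> 'r hyp \<Rightarrow> bool" where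
  "hyp_holds I x y (HypX S) = (I S (predp x) y \<and> x \<noteq> 1)"
| "hyp_holds I x y (HypY S) = (I S x (predp y) \<and> y \<noteq> 1)"

fun clause_holds :: "'a list \<Rightarrow> 'r \<Rightarrow> ('r \<Rightarrow> nat \<Rightarrow> nat \<Rightarrow> bool) \<Rightarrow> nat \<Rightarrow> nat
    \<Rightarrow> ('a, 'r) clause \<Rightarrow> bool" where
  "clause_holds w rb I x y (InputMin s R) =
     (x = y \<and> x = 1 \<and> w ! (x - 1) = s \<longrightarrow> I R x y)"
| "clause_holds w rb I x y (InputNotMin s R) =
     (x = y \<and> x \<noteq> 1 \<and> w ! (x - 1) = s \<longrightarrow> I R x y)"
| "clause_holds w rb I x y Contra =
     (\<not> (x = length w \<and> y = length w \<and> I rb x y))"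
| "clause_holds w rb I x y (Comp hs R) =
     ((\<forall>h\<in>set hs. hyp_holds I x y h) \<longrightarrow> I R x y)"

definition models :: "'a list \<Rightarrow> ('a, 'r) formula \<Rightarrow> bool" where
  "models w \<Phi> \<longleftrightarrow> (\<exists>I :: 'r \<Rightarrow> nat \<Rightarrow> nat \<Rightarrow> bool.
     \<forall>x\<in>{1..length w}. \<forall>y\<in>{1..length w}. \<forall>c\<in>set (clauses \<Phi>).
        clause_holds w (rbot \<Phi>) I x y c)"

datatype 'a ia = IA
  (ia_delta: "nat \<Rightarrow> nat \<Rightarrow> nat \<Rightarrow> nat")
  (ia_input: "'a \<Rightarrow> nat \<Rightarrow> nat \<Rightarrow> nat \<Rightarrow> nat")
  (ia_quiescent: nat)
  (ia_border: nat)
  (ia_accept: "nat set")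

definition ia_wf :: "'a ia \<Rightarrow> nat set \<Rightarrow> bool" where
  "ia_wf A Q \<longleftrightarrow> finite Q \<and> ia_quiescent A \<in> Q \<and> ia_border A \<in> Q
     \<and> ia_quiescent A \<noteq> ia_border A \<and> ia_accept A \<subseteq> Q
     \<and> (\<forall>p\<in>Q. \<forall>q\<in>Q. \<forall>r\<in>Q. ia_delta A p q r \<in> Q)
     \<and> (\<forall>a p q r. p \<in> Q \<longrightarrow> q \<in> Q \<longrightarrow> r \<in> Q \<longrightarrow> ia_input A a p q r \<in> Q)
     \<and> ia_delta A (ia_quiescent A) (ia_quiescent A) (ia_quiescent A) = ia_quiescent A"

fun conf :: "'a ia \<Rightarrow> 'a list \<Rightarrow> nat \<Rightarrow> nat \<Rightarrow> nat" where
  "conf A w 0 c = (if 1 \<le> c \<and> c \<le> length w then ia_quiescent A else ia_border A)"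
| "conf A w (Suc t) c =
     (if \<not> (1 \<le> c \<and> c \<le> length w) then ia_border A
      else if c = 1 \<and> Suc t \<le> length w then
        ia_input A (w ! t) (conf A w t 0) (conf A w t 1) (conf A w t 2)
      else ia_delta A (conf A w t (c - 1)) (conf A w t c) (conf A w t (c + 1)))"

definition ia_accepts_rt :: "'a ia \<Rightarrow> 'a list \<Rightarrow> bool" where
  "ia_accepts_rt A w \<longleftrightarrow> conf A w (length w) 1 \<in> ia_accept A"

end

theory Submission
  imports Defs "HOL-Library.Countable_Set"
begin

fun hok :: "'r set option \<Rightarrow> 'r set option \<Rightarrow> 'r hyp \<Rightarrow> bool" where
  "hok a b (HypX S) = (case a of None \<Rightarrow> False | Some A \<Rightarrow> S \<in> A)"
| "hok a b (HypY S) = (case b of None \<Rightarrow> False | Some B \<Rightarrow> S \<in> B)"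

definition step :: "('a, 'r) formula \<Rightarrow> bool \<Rightarrow> 'a option \<Rightarrow> 'r set option \<Rightarrow> 'r set option \<Rightarrow> 'r set" where
  "step \<Phi> fl d a b = {R. (\<exists>s. d = Some s \<and> fl \<and> InputMin s R \<in> set (clauses \<Phi>))
     \<or> (\<exists>s. d = Some s \<and> \<not> fl \<and> InputNotMin s R \<in> set (clauses \<Phi>))
     \<or> (\<exists>hs. Comp hs R \<in> set (clauses \<Phi>) \<and> (\<forall>h\<in>set hs. hok a b h))}"

fun Tv :: "'a list \<Rightarrow> ('a, 'r) formula \<Rightarrow> nat \<Rightarrow> nat \<Rightarrow> 'r set option" where
  "Tv w \<Phi> 0 y = None"
| "Tv w \<Phi> (Suc x) 0 = None"
| "Tv w \<Phi> (Suc x) (Suc y) = Some (step \<Phi> (x = 0) (if x = y then Some (w ! x) else None)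
      (Tv w \<Phi> x (Suc y)) (Tv w \<Phi> (Suc x) y))"

lemma Tv_some: "0 < x \<Longrightarrow> 0 < y \<Longrightarrow> \<exists>S. Tv w \<Phi> x y = Some S"
  by (cases x; cases y) auto

lemma sem_if:
  assumes n: "n = length w" "0 < n" and T: "Tv w \<Phi> n n = Some S" and nr: "rbot \<Phi> \<notin> S"
  shows "models w \<Phi>"
proof -
  define I where "I = (\<lambda>R x y. \<exists>S. Tv w \<Phi> x y = Some S \<and> R \<in> S)"
  have "clause_holds w (rbot \<Phi>) I x y c" if xr: "x \<in> {1..n}" and yr: "y \<in> {1..n}" and cin: "c \<in> set (clauses \<Phi>)" for x y c
  proof (cases c)
    case (InputMin s R)
    then show ?thesis using that by (auto simp: I_def step_def)
  next
    case (InputNotMin s R)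
    then show ?thesis using that
      by (cases x) (auto simp: I_def step_def)
  next
    case Contra
    then show ?thesis using T nr by (auto simp: I_def n)
  next
    case (Comp hs R)
    obtain x' y' where xy: "x = Suc x'" "y = Suc y'" using xr yr by (cases x; cases y) auto
    have "hok (Tv w \<Phi> x' (Suc y')) (Tv w \<Phi> (Suc x') y') h"
      if hh: "hyp_holds I x y h" for h
      using hh xy by (cases h) (auto simp: I_def predp_def split: option.splits)
    then have "\<forall>h\<in>set hs. hok (Tv w \<Phi> x' (Suc y')) (Tv w \<Phi> (Suc x') y') h"
      if "\<forall>h\<in>set hs. hyp_holds I x y h" using that by blast
    then have "(\<forall>h\<in>set hs. hyp_holds I x y h) \<longrightarrow> R \<in> step \<Phi> (x' = 0) (if x' = y' then Some (w ! x') else None)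
      (Tv w \<Phi> x' (Suc y')) (Tv w \<Phi> (Suc x') y')"
      using cin Comp unfolding step_def by blast
    then show ?thesis using Comp xy by (simp add: I_def)
  qed
  then show ?thesis unfolding models_def n by blast
qed

lemma sem_only:
  assumes n: "n = length w" and I: "\<forall>x\<in>{1..n}. \<forall>y\<in>{1..n}. \<forall>c\<in>set (clauses \<Phi>).
        clause_holds w (rbot \<Phi>) I x y c"
  shows "x + y = m \<Longrightarrow> x \<le> n \<Longrightarrow> y \<le> n \<Longrightarrow> Tv w \<Phi> x y = Some S \<Longrightarrow> R \<in> S \<Longrightarrow> I R x y"
proof (induction m arbitrary: x y S R rule: less_induct)
  case (less m)
  obtain x' y' where xy: "x = Suc x'" "y = Suc y'" using less.prems by (cases x; cases y) auto
  have ins: "\<And>c. c \<in> set (clauses \<Phi>) \<Longrightarrow> clause_holds w (rbot \<Phi>) I x y c"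
  proof -
    have "x \<in> {1..n}" "y \<in> {1..n}" using less.prems xy by auto
    then show "\<And>c. c \<in> set (clauses \<Phi>) \<Longrightarrow> clause_holds w (rbot \<Phi>) I x y c" using I by blast
  qed
  from less.prems xy have R: "R \<in> step \<Phi> (x' = 0) (if x' = y' then Some (w ! x') else None)
      (Tv w \<Phi> x' (Suc y')) (Tv w \<Phi> (Suc x') y')" by auto
  consider (a) s where "(if x' = y' then Some (w ! x') else None) = Some s" "x' = 0" "InputMin s R \<in> set (clauses \<Phi>)"
    | (b) s where "(if x' = y' then Some (w ! x') else None) = Some s" "x' \<noteq> 0" "InputNotMin s R \<in> set (clauses \<Phi>)"
    | (c) hs where "Comp hs R \<in> set (clauses \<Phi>)" "\<forall>h\<in>set hs. hok (Tv w \<Phi> x' (Suc y')) (Tv w \<Phi> (Suc x') y') h"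
    using R unfolding step_def by blast
  then show ?case
  proof cases
    case a
    then show ?thesis using ins[OF a(3)] xy by (auto split: if_splits)
  next
    case b
    then show ?thesis using ins[OF b(3)] xy by (auto split: if_splits)
  next
    case c
    have "hyp_holds I x y h" if h: "h \<in> set hs" for h
    proof (cases h)
      case (HypX S')
      with c h obtain A where A: "Tv w \<Phi> x' (Suc y') = Some A" "S' \<in> A"
        by (auto split: option.splits)
      then have "x' \<noteq> 0" by (cases x') auto
      have "I S' x' y" using less.IH[of "x' + y" x' y A S'] A less.prems xy by auto
      then show ?thesis using HypX xy \<open>x' \<noteq> 0\<close> by (auto simp: predp_def)
    next
      case (HypY S')
      with c h obtain A where A: "Tv w \<Phi> (Suc x') y' = Some A" "S' \<in> A"
        by (auto split: option.splits)
      then have "y' \<noteq> 0" by (cases y') auto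
      have "I S' x y'" using less.IH[of "x + y'" x y' A S'] A less.prems xy by auto
      then show ?thesis using HypY xy \<open>y' \<noteq> 0\<close> by (auto simp: predp_def)
    qed
    then show ?thesis using ins[OF c(1)] by simp
  qed
qed

lemma sem_iff:
  assumes "w \<noteq> []"
  shows "models w \<Phi> \<longleftrightarrow> (Contra \<notin> set (clauses \<Phi>) \<or> (\<exists>S. Tv w \<Phi> (length w) (length w) = Some S \<and> rbot \<Phi> \<notin> S))"
proof
  assume m: "models w \<Phi>"
  show "Contra \<notin> set (clauses \<Phi>) \<or> (\<exists>S. Tv w \<Phi> (length w) (length w) = Some S \<and> rbot \<Phi> \<notin> S)"
  proof (cases "Contra \<in> set (clauses \<Phi>)")
    case False then show ?thesis by blast
  next
    case True
    from m obtain I where I: "\<forall>x\<in>{1..length w}. \<forall>y\<in>{1..length w}. \<forall>c\<in>set (clauses \<Phi>).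
        clause_holds w (rbot \<Phi>) I x y c" unfolding models_def by blast
    obtain S where S: "Tv w \<Phi> (length w) (length w) = Some S" using Tv_some assms by blast
    have nin: "length w \<in> {1..length w}" using assms by (cases w) auto
    have "rbot \<Phi> \<notin> S"
    proof
      assume "rbot \<Phi> \<in> S"
      then have "I (rbot \<Phi>) (length w) (length w)" using sem_only[OF refl I refl order.refl order.refl S] by blast
      moreover have "clause_holds w (rbot \<Phi>) I (length w) (length w) Contra" using I nin True by blast
      ultimately show False by simp
    qed
    then show ?thesis using S by blast
  qed
next
  assume h: "Contra \<notin> set (clauses \<Phi>) \<or> (\<exists>S. Tv w \<Phi> (length w) (length w) = Some S \<and> rbot \<Phi> \<notin> S)"
  show "models w \<Phi>"
  proof (cases "Contra \<in> set (clauses \<Phi>)")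
    case True
    then obtain S where S: "Tv w \<Phi> (length w) (length w) = Some S" "rbot \<Phi> \<notin> S" using h by blast
    have "0 < length w" using assms by simp
    from sem_if[OF refl this S] show ?thesis .
  next
    case False
    have "clause_holds w (rbot \<Phi>) (\<lambda>_ _ _. True) x y c" if "c \<in> set (clauses \<Phi>)" for x y c
    proof (cases c)
      case Contra then show ?thesis using False that by simp
    qed simp_all
    then show ?thesis unfolding models_def by blast
  qed
qed


datatype 'r st = Q0 | Bd | Act "bool \<times> bool \<times> bool \<Rightarrow> 'r set option"

fun vl :: "'r st \<Rightarrow> bool \<times> bool \<times> bool \<Rightarrow> 'r set option" where
  "vl (Act f) k = f k"
| "vl _ k = None"

definition g :: "('a, 'r) formula \<Rightarrow> 'r set option \<Rightarrow> 'r set option \<Rightarrow> 'r set option" where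
  "g \<Phi> a b = Some (step \<Phi> False None a b)"

definition tri :: "('v option \<Rightarrow> 'v option \<Rightarrow> 'v option) \<Rightarrow> 'v option \<Rightarrow> 'v option \<Rightarrow> 'v option \<Rightarrow> 'v option
   \<Rightarrow> bool \<Rightarrow> bool \<Rightarrow> bool \<Rightarrow> 'v option" where
  "tri G l01 l11 r10 r11 fr i j =
    (let u00 = (if fr then None else G r10 l01);
         u01 = (if fr then None else G r11 u00);
         u10 = G u00 l11;
         u11 = G u01 u10
     in if i then (if j then u11 else u10) else (if j then u01 else u00))"

definition dF :: "('a, 'r) formula \<Rightarrow> 'r st \<Rightarrow> 'r st \<Rightarrow> bool \<Rightarrow> bool \<times> bool \<times> bool \<Rightarrow> 'r set option" where
  "dF \<Phi> L R fr = (\<lambda>(lo, i, j). tri (if lo then (\<lambda>a b. g \<Phi> b a) else g \<Phi>)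
      (vl L (lo, False, True)) (vl L (lo, True, True)) (vl R (lo, True, False)) (vl R (lo, True, True)) fr i j)"

definition dlt :: "('a, 'r) formula \<Rightarrow> 'r st \<Rightarrow> 'r st \<Rightarrow> 'r st \<Rightarrow> 'r st" where
  "dlt \<Phi> L M R = (if M = Q0 then (if L = Q0 then Q0 else Act (dF \<Phi> L R True)) else Act (dF \<Phi> L R False))"

definition cw :: "('a, 'r) formula \<Rightarrow> 'a \<Rightarrow> 'r st \<Rightarrow> 'r st \<Rightarrow> bool \<Rightarrow> bool \<Rightarrow> 'r set option" where
  "cw \<Phi> a M R i j =
    (let fr = (M = Q0);
         u00 = vl M (False, True, True);
         u01 = (if fr then None else g \<Phi> (vl R (False, True, True)) u00);
         u10 = (if fr then None else g \<Phi> u00 (vl R (True, True, True)))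
     in if i then (if j then Some (step \<Phi> fr (Some a) u01 u10) else u10) else (if j then u01 else u00))"

definition inp :: "('a, 'r) formula \<Rightarrow> 'a \<Rightarrow> 'r st \<Rightarrow> 'r st \<Rightarrow> 'r st \<Rightarrow> 'r st" where
  "inp \<Phi> a L M R = Act (\<lambda>(lo, i, j). if lo then cw \<Phi> a M R j i else cw \<Phi> a M R i j)"

definition win :: "'a list \<Rightarrow> ('a, 'r) formula \<Rightarrow> nat \<Rightarrow> nat \<Rightarrow> bool \<times> bool \<times> bool \<Rightarrow> 'r set option" where
  "win w \<Phi> A B = (\<lambda>(lo, i, j). if lo then Tv w \<Phi> (B + of_bool j) (A + of_bool i)
                                 else Tv w \<Phi> (A + of_bool i) (B + of_bool j))"

definition spec :: "'a list \<Rightarrow> ('a, 'r) formula \<Rightarrow> nat \<Rightarrow> nat \<Rightarrow> 'r st" where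
  "spec w \<Phi> t c = (if t < c then Q0 else Act (win w \<Phi> (t - c) (t + c - 2)))"

lemma Tv_unf: "0 < x \<Longrightarrow> 0 < y \<Longrightarrow> x \<noteq> y \<Longrightarrow>
   Tv w \<Phi> x y = g \<Phi> (Tv w \<Phi> (x - 1) y) (Tv w \<Phi> x (y - 1))"
  by (cases x; cases y) (auto simp: g_def step_def)

lemma Tv_x0: "Tv w \<Phi> x 0 = None"
  by (cases x) auto

declare Tv.simps(3)[simp del]

lemma gen:
  assumes A: "1 \<le> A" and B: "A + 2 \<le> B" and M: "M \<noteq> Q0"
    and L: "L = Act (win w \<Phi> A (B - 2))"
    and R: "R = (if 2 \<le> A then Act (win w \<Phi> (A - 2) B) else Q0)"
  shows "dlt \<Phi> L M R = Act (win w \<Phi> A B)"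
proof -
  have h1: "Tv w \<Phi> A B = g \<Phi> (Tv w \<Phi> (A-1) B) (Tv w \<Phi> A (B-1))" using A B by (intro Tv_unf) auto
  have h2: "Tv w \<Phi> A (Suc B) = g \<Phi> (Tv w \<Phi> (A-1) (Suc B)) (Tv w \<Phi> A B)" using A B Tv_unf[of A "Suc B"] by auto
  have h3: "Tv w \<Phi> (Suc A) B = g \<Phi> (Tv w \<Phi> A B) (Tv w \<Phi> (Suc A) (B-1))" using A B Tv_unf[of "Suc A" B] by auto
  have h4: "Tv w \<Phi> (Suc A) (Suc B) = g \<Phi> (Tv w \<Phi> A (Suc B)) (Tv w \<Phi> (Suc A) B)" using A B Tv_unf[of "Suc A" "Suc B"] by auto
  have k1: "Tv w \<Phi> B A = g \<Phi> (Tv w \<Phi> (B-1) A) (Tv w \<Phi> B (A-1))" using A B by (intro Tv_unf) auto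
  have k2: "Tv w \<Phi> (Suc B) A = g \<Phi> (Tv w \<Phi> B A) (Tv w \<Phi> (Suc B) (A-1))" using A B Tv_unf[of "Suc B" A] by auto
  have k3: "Tv w \<Phi> B (Suc A) = g \<Phi> (Tv w \<Phi> (B-1) (Suc A)) (Tv w \<Phi> B A)" using A B Tv_unf[of B "Suc A"] by auto
  have k4: "Tv w \<Phi> (Suc B) (Suc A) = g \<Phi> (Tv w \<Phi> B (Suc A)) (Tv w \<Phi> (Suc B) A)" using A B Tv_unf[of "Suc B" "Suc A"] by auto
  have r1: "vl R (lo, True, j) = (if lo then Tv w \<Phi> (B + of_bool j) (A - 1) else Tv w \<Phi> (A - 1) (B + of_bool j))" for lo j
    using A by (cases "2 \<le> A") (auto simp: R win_def Tv_x0 numeral_2_eq_2 Suc_diff_Suc)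
  have l1: "vl L (lo, i, True) = (if lo then Tv w \<Phi> (B - 1) (A + of_bool i) else Tv w \<Phi> (A + of_bool i) (B - 1))" for lo i
  proof -
    have "B - 2 + 1 = B - 1" using B by simp
    then show ?thesis by (auto simp: L win_def)
  qed
  have "dF \<Phi> L R False = win w \<Phi> A B"
  proof (rule ext, clarify)
    fix lo i j
    show "dF \<Phi> L R False (lo, i, j) = win w \<Phi> A B (lo, i, j)"
      unfolding dF_def r1 l1
      by (cases lo; cases i; cases j) (simp_all add: tri_def win_def h1 h2 h3 h4 k1 k2 k3 k4 Let_def)
  qed
  then show ?thesis using M by (simp add: dlt_def)
qed

lemma front:
  assumes B: "2 \<le> B" and L: "L = Act (win w \<Phi> 0 (B - 2))"
  shows "dlt \<Phi> L Q0 R = Act (win w \<Phi> 0 B)"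
proof -
  have h3: "Tv w \<Phi> (Suc 0) B = g \<Phi> None (Tv w \<Phi> (Suc 0) (B-1))" using B Tv_unf[of 1 B] by auto
  have h4: "Tv w \<Phi> (Suc 0) (Suc B) = g \<Phi> None (Tv w \<Phi> (Suc 0) B)" using B Tv_unf[of 1 "Suc B"] by auto
  have k3: "Tv w \<Phi> B (Suc 0) = g \<Phi> (Tv w \<Phi> (B-1) (Suc 0)) None" using Tv_unf[of B 1 w \<Phi>] B by (simp add: Tv_x0)
  have k4: "Tv w \<Phi> (Suc B) (Suc 0) = g \<Phi> (Tv w \<Phi> B (Suc 0)) None" using Tv_unf[of "Suc B" 1 w \<Phi>] B by (simp add: Tv_x0)
  have e: "B - 2 + 1 = B - 1" using B by simp
  have l1: "vl L (lo, True, True) = (if lo then Tv w \<Phi> (B - 1) 1 else Tv w \<Phi> (Suc 0) (B - 1))" for lo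
    using e by (auto simp: L win_def)
  have ne: "L \<noteq> Q0" using L by simp
  have "dF \<Phi> L R True = win w \<Phi> 0 B"
  proof (rule ext, clarify)
    fix lo i j
    show "dF \<Phi> L R True (lo, i, j) = win w \<Phi> 0 B (lo, i, j)"
      unfolding dF_def l1
      by (cases lo; cases i; cases j) (simp_all add: tri_def win_def h3 h4 k3 k4 Tv_x0 Let_def)
  qed
  then show ?thesis using ne by (simp add: dlt_def)
qed

lemma cell1:
  assumes R: "t = 0 \<or> R = spec w \<Phi> t 2"
  shows "inp \<Phi> (w ! t) L (spec w \<Phi> t 1) R = Act (win w \<Phi> t t)"
proof (cases t)
  case 0
  have d: "Tv w \<Phi> (Suc 0) (Suc 0) = Some (step \<Phi> True (Some (w ! 0)) None None)"
    by (simp add: Tv.simps(3))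
  have "cw \<Phi> (w ! 0) Q0 R i j = Tv w \<Phi> (of_bool i) (of_bool j)" for i j
    by (cases i; cases j) (simp_all add: cw_def d Tv_x0)
  then show ?thesis using 0 
    by (auto simp: inp_def spec_def win_def intro!: ext)
next
  case (Suc t0)
  have M: "spec w \<Phi> t 1 = Act (win w \<Phi> t0 t0)" using Suc by (simp add: spec_def)
  have R1: "vl R (False, True, True) = Tv w \<Phi> t0 (Suc t)" "vl R (True, True, True) = Tv w \<Phi> (Suc t) t0"
    using R Suc by (cases t0; auto simp: spec_def win_def numeral_2_eq_2)+
  have h2: "Tv w \<Phi> t (Suc t) = g \<Phi> (Tv w \<Phi> t0 (Suc t)) (Tv w \<Phi> t t)" using Suc Tv_unf[of t "Suc t"] by auto
  have h3: "Tv w \<Phi> (Suc t) t = g \<Phi> (Tv w \<Phi> t t) (Tv w \<Phi> (Suc t) t0)" using Suc Tv_unf[of "Suc t" t] by auto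
  have h4: "Tv w \<Phi> (Suc t) (Suc t) = Some (step \<Phi> False (Some (w ! t)) (Tv w \<Phi> t (Suc t)) (Tv w \<Phi> (Suc t) t))"
    using Suc by (simp add: Tv.simps(3))
  have v: "win w \<Phi> t0 t0 (False, True, True) = Tv w \<Phi> t t" using Suc by (simp add: win_def)
  have "cw \<Phi> (w ! t) (Act (win w \<Phi> t0 t0)) R i j = Tv w \<Phi> (t + of_bool i) (t + of_bool j)" for i j
    by (cases i; cases j) (simp_all add: cw_def v R1 h2 h3 h4 Let_def)
  then show ?thesis unfolding M
    by (auto simp: inp_def win_def intro!: ext)
qed


fun chd :: "('a, 'r) clause \<Rightarrow> 'r set" where
  "chd (InputMin s R) = {R}"
| "chd (InputNotMin s R) = {R}"
| "chd Contra = {}"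
| "chd (Comp hs R) = {R}"

definition HH :: "('a, 'r) formula \<Rightarrow> 'r set" where
  "HH \<Phi> = \<Union> (chd ` set (clauses \<Phi>))"

definition VV :: "('a, 'r) formula \<Rightarrow> 'r set option set" where
  "VV \<Phi> = insert None (Some ` Pow (HH \<Phi>))"

definition AS :: "('a, 'r) formula \<Rightarrow> 'r st set" where
  "AS \<Phi> = {Q0, Bd} \<union> Act ` {f. \<forall>k. f k \<in> VV \<Phi>}"

lemma finite_chd: "finite (chd c)"
  by (cases c) auto

lemma finite_HH: "finite (HH \<Phi>)"
  unfolding HH_def by (simp add: finite_chd)

lemma finite_AS: "finite (AS \<Phi>)"
proof -
  have fV: "finite (VV \<Phi>)" using finite_HH[of \<Phi>] by (simp add: VV_def)
  have "finite {f. \<forall>x. (x \<in> (UNIV :: (bool \<times> bool \<times> bool) set) \<longrightarrow> f x \<in> VV \<Phi>) \<and> (x \<notin> UNIV \<longrightarrow> f x = None)}"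
    by (rule finite_set_of_finite_funs) (simp_all add: fV)
  then have "finite {f. \<forall>k :: bool \<times> bool \<times> bool. f k \<in> VV \<Phi>}" by simp
  then show ?thesis by (simp add: AS_def)
qed

lemma step_sub: "step \<Phi> fl d a b \<subseteq> HH \<Phi>"
  unfolding step_def HH_def by force

lemma g_V: "g \<Phi> a b \<in> VV \<Phi>"
  using step_sub[of \<Phi> False None a b] by (auto simp: g_def VV_def)

lemma Some_step_V: "Some (step \<Phi> fl d a b) \<in> VV \<Phi>"
  using step_sub[of \<Phi> fl d a b] by (auto simp: VV_def)

lemma None_V: "None \<in> VV \<Phi>" by (simp add: VV_def)

lemma vl_V: "st \<in> AS \<Phi> \<Longrightarrow> vl st k \<in> VV \<Phi>"
  by (cases k) (auto simp: AS_def None_V)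

lemma tri_V: "(\<And>a b. G a b \<in> VV \<Phi>) \<Longrightarrow> tri G l01 l11 r10 r11 fr i j \<in> VV \<Phi>"
  by (simp add: tri_def Let_def None_V)

lemma dlt_AS: "dlt \<Phi> L M R \<in> AS \<Phi>"
proof -
  have "\<forall>k. dF \<Phi> L R fr k \<in> VV \<Phi>" for fr
    by (auto simp: dF_def intro!: tri_V g_V)
  then show ?thesis by (auto simp: dlt_def AS_def)
qed

lemma inp_AS: "M \<in> AS \<Phi> \<Longrightarrow> inp \<Phi> a L M R \<in> AS \<Phi>"
proof -
  assume M: "M \<in> AS \<Phi>"
  have "cw \<Phi> a M R i j \<in> VV \<Phi>" for i j
    using vl_V[OF M] by (simp add: cw_def Let_def g_V Some_step_V None_V)
  then show ?thesis by (auto simp: inp_def AS_def)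
qed

lemma Tv_V: "Tv w \<Phi> x y \<in> VV \<Phi>"
  by (cases x; cases y) (simp_all add: None_V Some_step_V Tv.simps(3))

lemma spec_AS: "spec w \<Phi> t c \<in> AS \<Phi>"
  by (auto simp: spec_def AS_def win_def Tv_V)

definition acc :: "('a, 'r) formula \<Rightarrow> 'r st \<Rightarrow> bool" where
  "acc \<Phi> st = (Contra \<notin> set (clauses \<Phi>) \<or> (\<exists>S. vl st (False, True, True) = Some S \<and> rbot \<Phi> \<notin> S))"

definition enc :: "('a, 'r) formula \<Rightarrow> 'r st \<Rightarrow> nat" where
  "enc \<Phi> = to_nat_on (AS \<Phi>)"

definition dec :: "('a, 'r) formula \<Rightarrow> nat \<Rightarrow> 'r st" where
  "dec \<Phi> = from_nat_into (AS \<Phi>)"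

definition theIA :: "('a, 'r) formula \<Rightarrow> 'a ia" where
  "theIA \<Phi> = IA (\<lambda>p q r. enc \<Phi> (dlt \<Phi> (dec \<Phi> p) (dec \<Phi> q) (dec \<Phi> r)))
     (\<lambda>a p q r. enc \<Phi> (inp \<Phi> a (dec \<Phi> p) (dec \<Phi> q) (dec \<Phi> r)))
     (enc \<Phi> Q0) (enc \<Phi> Bd) (enc \<Phi> ` {s \<in> AS \<Phi>. acc \<Phi> s})"

lemma cAS: "countable (AS \<Phi>)" using finite_AS by (rule countable_finite)

lemma dec_enc[simp]: "s \<in> AS \<Phi> \<Longrightarrow> dec \<Phi> (enc \<Phi> s) = s"
  unfolding dec_def enc_def by (rule from_nat_into_to_nat_on[OF cAS])

lemma dec_AS: "dec \<Phi> p \<in> AS \<Phi>"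
  unfolding dec_def by (rule from_nat_into) (simp add: AS_def)

lemma Q0_AS[simp]: "Q0 \<in> AS \<Phi>" and Bd_AS[simp]: "Bd \<in> AS \<Phi>" by (simp_all add: AS_def)

lemma wf: "ia_wf (theIA \<Phi>) (enc \<Phi> ` AS \<Phi>)"
proof -
  have inj: "inj_on (enc \<Phi>) (AS \<Phi>)" unfolding enc_def by (rule inj_on_to_nat_on[OF cAS])
  have ne: "enc \<Phi> Q0 \<noteq> enc \<Phi> Bd" using inj_onD[OF inj, of Q0 Bd] by auto
  have dq: "dlt \<Phi> Q0 Q0 Q0 = Q0" by (simp add: dlt_def)
  show ?thesis
    unfolding ia_wf_def theIA_def
    using ne finite_AS dlt_AS inp_AS dec_AS dq by (auto intro!: imageI)
qed


lemma conf_0: "conf A w t 0 = ia_border A"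
  by (cases t) auto

lemma A_simps: "ia_delta (theIA \<Phi>) = (\<lambda>p q r. enc \<Phi> (dlt \<Phi> (dec \<Phi> p) (dec \<Phi> q) (dec \<Phi> r)))"
  "ia_input (theIA \<Phi>) = (\<lambda>a p q r. enc \<Phi> (inp \<Phi> a (dec \<Phi> p) (dec \<Phi> q) (dec \<Phi> r)))"
  "ia_quiescent (theIA \<Phi>) = enc \<Phi> Q0" "ia_border (theIA \<Phi>) = enc \<Phi> Bd"
  "ia_accept (theIA \<Phi>) = enc \<Phi> ` {s \<in> AS \<Phi>. acc \<Phi> s}"
  by (simp_all add: theIA_def)

lemma dspec[simp]: "dec \<Phi> (enc \<Phi> (spec w \<Phi> t c)) = spec w \<Phi> t c"
  by (simp add: spec_AS)

lemma inv:
  "t \<le> length w \<Longrightarrow> 1 \<le> c \<Longrightarrow> c \<le> length w \<Longrightarrow> conf (theIA \<Phi>) w t c = enc \<Phi> (spec w \<Phi> t c)"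
proof (induction t arbitrary: c)
  case 0
  then show ?case by (simp add: A_simps spec_def)
next
  case (Suc t)
  let ?n = "length w"
  show ?case
  proof (cases "c = 1")
    case True
    have c0: "dec \<Phi> (conf (theIA \<Phi>) w t 0) = Bd" by (simp add: conf_0 A_simps)
    have c1: "dec \<Phi> (conf (theIA \<Phi>) w t 1) = spec w \<Phi> t 1" using Suc by simp
    have R: "t = 0 \<or> dec \<Phi> (conf (theIA \<Phi>) w t 2) = spec w \<Phi> t 2"
    proof (cases "t = 0")
      case False
      then have "2 \<le> ?n" using Suc.prems by simp
      then show ?thesis using Suc by simp
    qed simp
    have "conf (theIA \<Phi>) w (Suc t) c = enc \<Phi> (inp \<Phi> (w ! t) Bd (spec w \<Phi> t 1) (dec \<Phi> (conf (theIA \<Phi>) w t 2)))"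
      using True Suc.prems c0 c1 by (simp add: A_simps)
    also have "\<dots> = enc \<Phi> (Act (win w \<Phi> t t))" using cell1[OF R] by simp
    also have "\<dots> = enc \<Phi> (spec w \<Phi> (Suc t) c)" using True by (simp add: spec_def)
    finally show ?thesis .
  next
    case False
    then have c2: "2 \<le> c" using Suc.prems by simp
    have L: "dec \<Phi> (conf (theIA \<Phi>) w t (c - 1)) = spec w \<Phi> t (c - 1)" using Suc c2 by simp
    have M: "dec \<Phi> (conf (theIA \<Phi>) w t c) = spec w \<Phi> t c" using Suc c2 by simp
    have cf: "conf (theIA \<Phi>) w (Suc t) c = enc \<Phi> (dlt \<Phi> (spec w \<Phi> t (c - 1)) (spec w \<Phi> t c) (dec \<Phi> (conf (theIA \<Phi>) w t (c + 1))))"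
      using False Suc.prems L M by (simp add: A_simps)
    consider (q) "Suc t < c" | (f) "c = Suc t" | (g) "c \<le> t" by linarith
    then show ?thesis
    proof cases
      case q
      have "spec w \<Phi> t (c - 1) = Q0" "spec w \<Phi> t c = Q0" "spec w \<Phi> (Suc t) c = Q0"
        using q by (simp_all add: spec_def)
      then show ?thesis using cf by (simp add: dlt_def)
    next
      case f
      have B: "2 \<le> t + t" using f c2 by simp
      have "spec w \<Phi> t (c - 1) = Act (win w \<Phi> 0 (t + t - 2))" using f by (simp add: spec_def)
      then have "dlt \<Phi> (spec w \<Phi> t (c - 1)) Q0 (dec \<Phi> (conf (theIA \<Phi>) w t (c + 1))) = Act (win w \<Phi> 0 (t + t))"
        by (simp only: front[OF B refl])
      moreover have "spec w \<Phi> t c = Q0" using f by (simp add: spec_def)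
      moreover have "spec w \<Phi> (Suc t) c = Act (win w \<Phi> 0 (t + t))" using f by (simp add: spec_def)
      ultimately show ?thesis using cf by simp
    next
      case g
      define A where "A = Suc t - c"
      define B where "B = Suc t + c - 2"
      have A1: "1 \<le> A" and AB: "A + 2 \<le> B" using g c2 by (simp_all add: A_def B_def)
      have Mq: "spec w \<Phi> t c \<noteq> Q0" using g by (simp add: spec_def)
      have Ls: "spec w \<Phi> t (c - 1) = Act (win w \<Phi> A (B - 2))"
      proof -
        have "t - (c - 1) = A" "t + (c - 1) - 2 = B - 2" using g c2 by (simp_all add: A_def B_def)
        then show ?thesis using g by (simp add: spec_def)
      qed
      have "c + 1 \<le> length w" using g Suc.prems by simp
      then have Rd: "dec \<Phi> (conf (theIA \<Phi>) w t (c + 1)) = spec w \<Phi> t (c + 1)" using Suc by simp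
      have Rs: "spec w \<Phi> t (c + 1) = (if 2 \<le> A then Act (win w \<Phi> (A - 2) B) else Q0)"
      proof (cases "c + 1 \<le> t")
        case True
        have "t - (c + 1) = A - 2" "t + (c + 1) - 2 = B" "2 \<le> A" using True c2 by (simp_all add: A_def B_def)
        then show ?thesis using True by (simp add: spec_def)
      next
        case False
        then show ?thesis by (simp add: spec_def A_def)
      qed
      have "dlt \<Phi> (spec w \<Phi> t (c - 1)) (spec w \<Phi> t c) (dec \<Phi> (conf (theIA \<Phi>) w t (c + 1))) = Act (win w \<Phi> A B)"
        unfolding Rd by (rule gen[OF A1 AB Mq Ls Rs])
      moreover have "spec w \<Phi> (Suc t) c = Act (win w \<Phi> A B)" using g by (simp add: spec_def A_def B_def)
      ultimately show ?thesis using cf by simp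
    qed
  qed
qed

theorem lemma6:
  fixes \<Phi> :: "('a::finite, 'r) formula"
  shows "\<exists>(A :: 'a ia) (Q :: nat set). ia_wf A Q \<and>
           (\<forall>w :: 'a list. w \<noteq> [] \<longrightarrow> (ia_accepts_rt A w \<longleftrightarrow> models w \<Phi>))"
proof (intro exI conjI allI impI)
  show "ia_wf (theIA \<Phi>) (enc \<Phi> ` AS \<Phi>)" by (rule wf)
  fix w :: "'a list"
  assume w: "w \<noteq> []"
  let ?n = "length w"
  have n1: "1 \<le> ?n" using w by (cases w) auto
  have c: "conf (theIA \<Phi>) w ?n 1 = enc \<Phi> (spec w \<Phi> ?n 1)" using inv[of ?n w 1] n1 by simp
  have sp: "spec w \<Phi> ?n 1 = Act (win w \<Phi> (?n - 1) (?n - 1))" using n1 w by (simp add: spec_def)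
  have v: "vl (spec w \<Phi> ?n 1) (False, True, True) = Tv w \<Phi> ?n ?n" using n1 sp by (simp add: win_def)
  have inj: "inj_on (enc \<Phi>) (AS \<Phi>)" unfolding enc_def by (rule inj_on_to_nat_on[OF cAS])
  have "ia_accepts_rt (theIA \<Phi>) w \<longleftrightarrow> acc \<Phi> (spec w \<Phi> ?n 1)"
  proof
    assume "ia_accepts_rt (theIA \<Phi>) w"
    then obtain s where s: "s \<in> AS \<Phi>" "acc \<Phi> s" "enc \<Phi> (spec w \<Phi> ?n 1) = enc \<Phi> s"
      unfolding ia_accepts_rt_def c A_simps by auto
    then have "spec w \<Phi> ?n 1 = s" using inj_onD[OF inj] spec_AS by blast
    then show "acc \<Phi> (spec w \<Phi> ?n 1)" using s by simp
  next
    assume "acc \<Phi> (spec w \<Phi> ?n 1)"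
    then show "ia_accepts_rt (theIA \<Phi>) w"
      unfolding ia_accepts_rt_def c A_simps using spec_AS by blast
  qed
  also have "\<dots> \<longleftrightarrow> models w \<Phi>"
  proof -
    have m: "models w \<Phi> \<longleftrightarrow> (Contra \<notin> set (clauses \<Phi>) \<or> (\<exists>S. Tv w \<Phi> ?n ?n = Some S \<and> rbot \<Phi> \<notin> S))"
      by (rule sem_iff[OF w])
    show ?thesis unfolding m acc_def v ..
  qed
  finally show "ia_accepts_rt (theIA \<Phi>) w \<longleftrightarrow> models w \<Phi>" .
qed

end
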